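(* For every well-typed $\lambda^{dFG}$ expression $e$, all stores $\Sigma,\Sigma'$, heaps $\mu,\mu'$, labels $pc$, environments $\theta$ and values $v$ of $\lambda^{dFG}$: if $\langle\Sigma,\mu,e\rangle\Downarrow^{\theta}_{pc}\langle\Sigma',\mu',v\rangle$, then in the forcing semantics of $\lambda^{dCG}$, $\langle\langle\!\langle\Sigma\rangle\!\rangle,\langle\!\langle\mu\rangle\!\rangle,pc,\langle\!\langle e\rangle\!\rangle\rangle\Downarrow^{\langle\!\langle\theta\rangle\!\rangle}\langle\langle\!\langle\Sigma'\rangle\!\rangle,\langle\!\langle\mu'\rangle\!\rangle,pc,\langle\!\langle v\rangle\!\rangle\rangle$.
   Context: Labels form a lattice $(\mathcal{L},\sqsubseteq,\sqcup)$. Lists: $|X|$ length, $X[n]$ entry $n$ (from 0), $X[n\mapsto y]$ replacement (append if $n=|X|$). Source calculus $\lambda^{dFG}$: types $\mathbf{unit},\tau_1\to\tau_2,\tau_1+\tau_2,\tau_1\times\tau_2,\mathcal{L},\mathbf{Ref}\,s\,\tau$ ($s\in\{I,S\}$, standard simple typing); expressions $x,\lambda x.e,e_1e_2,(),\ell,(e_1,e_2),\mathbf{fst}(e),\mathbf{snd}(e),\mathbf{inl}(e),\mathbf{inr}(e),\mathbf{case}(e,x.e_1,x.e_2),\mathbf{getLabel},\mathbf{labelOf}(e),e_1\sqsubseteq^?e_2,\mathbf{taint}(e_1,e_2),\mathbf{new}(e),!e,e_1:=e_2,\mathbf{labelOfRef}(e)$; raw values $r::=()\mid(x.e,\theta)\mid\mathbf{inl}(v)\mid\mathbf{inr}(v)\mid(v_1,v_2)\mid\ell\mid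 n_\ell\mid n$; values $v::=r^\ell$; $r^\ell\sqcup\ell'=r^{\ell\sqcup\ell'}$; stores map labels to lists of raw values; heaps are lists of values. Evaluation $\langle\Sigma,\mu,e\rangle\Downarrow^\theta_{pc}\langle\Sigma',\mu',v\rangle$ (store/heap threaded left to right through premises; "$e\Downarrow v$" uses current $\theta,pc$): $x\Downarrow\theta(x)\sqcup pc$; $()\Downarrow()^{pc}$; $\ell\Downarrow\ell^{pc}$; $\lambda x.e\Downarrow(x.e,\theta)^{pc}$; $\mathbf{getLabel}\Downarrow pc^{pc}$; $e_1e_2\Downarrow v$ if $e_1\Downarrow(x.e,\theta')^\ell$, $e_2\Downarrow v_2$ and $e$ evaluates to $v$ in $\theta'[x\mapsto v_2]$ at $pc\sqcup\ell$; $\mathbf{inl}(e)\Downarrow\mathbf{inl}(v)^{pc}$, $\mathbf{inr}(e)\Downarrow\mathbf{inr}(v)^{pc}$ if $e\Downarrow v$; $\mathbf{case}(e,x.e_1,x.e_2)\Downarrow v$ if $e\Downarrow\mathbf{inl}(v_1)^\ell$ and $e_1$ gives $v$ in $\theta[x\mapsto v_1]$ at $pc\sqcup\ell$ (symmetric for $\mathbf{inr}$, $e_2$); $(e_1,e_2)\Downarrow(v_1,v_2)^{pc}$; if $e\Downarrow(v_1,v_2)^\ell$ then $\mathbf{fst}(e)\Downarrow v_1\sqcup\ell$, $\mathbf{snd}(e)\Downarrow v_2\sqcup\ell$; if $e\Downarrow r^\ell$ then $\mathbf{labelOf}(e)\Downarrow\ell^\ell$; if $e_1\Downarrow\ell_1^{\ell_1'}$,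 $e_2\Downarrow\ell_2^{\ell_2'}$ then $e_1\sqsubseteq^?e_2\Downarrow\mathbf{inl}(()^{pc})^{\ell_1'\sqcup\ell_2'}$ if $\ell_1\sqsubseteq\ell_2$ else $\mathbf{inr}(()^{pc})^{\ell_1'\sqcup\ell_2'}$; $\mathbf{taint}(e_1,e_2)\Downarrow v$ if $e_1\Downarrow\ell^{\ell'}$, $\ell'\sqsubseteq\ell$, and $e_2$ gives $v$ at program counter $\ell$. References of type $\mathbf{Ref}\,I$: $\mathbf{new}(e)\Downarrow(n_\ell)^{pc}$ if $e\Downarrow r^\ell$ with store $\Sigma'$, $n=|\Sigma'(\ell)|$, new store $\Sigma'[\ell\mapsto\Sigma'(\ell)[n\mapsto r]]$; $!e\Downarrow r^{\ell\sqcup\ell'}$ if $e\Downarrow(n_\ell)^{\ell'}$ with store $\Sigma'$ and $\Sigma'(\ell)[n]=r$; $e_1:=e_2\Downarrow()^{pc}$ if $e_1\Downarrow(n_\ell)^{\ell_1}$, $\ell_1\sqsubseteq\ell$, $e_2\Downarrow r^{\ell_2}$ with store $\Sigma''$, $\ell_2\sqsubseteq\ell$, new store $\Sigma''[\ell\mapsto\Sigma''(\ell)[n\mapsto r]]$; $\mathbf{labelOfRef}(e)\Downarrow\ell^{\ell\sqcup\ell'}$ if $e\Downarrow(n_\ell)^{\ell'}$. References of type $\mathbf{Ref}\,S$: $\mathbf{new}(e)\Downarrow n^{pc}$ if $e\Downarrow v$ with heap $\mu'$, $n=|\mu'|$, new heap $\mu'[n\mapsto v]$; $!e\Downarrow r^{\ell\sqcup\ell'}$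 if $e\Downarrow n^\ell$, heap entry $r^{\ell'}$ at $n$; $\mathbf{labelOfRef}(e)\Downarrow\ell_2^{\ell_1\sqcup\ell_2}$ if $e\Downarrow n^{\ell_1}$, heap entry $r^{\ell_2}$; $e_1:=e_2\Downarrow()^{pc}$ if $e_1\Downarrow n^\ell$, $e_2\Downarrow r_2^{\ell_2}$ with heap $\mu''$, $\mu''[n]=r_1^{\ell_1}$, $\ell\sqsubseteq\ell_1$, new heap $\mu''[n\mapsto r_2^{\ell_2\sqcup\ell}]$. Target calculus $\lambda^{dCG}$: types add $\mathbf{LIO}\,\tau$, $\mathbf{Labeled}\,\tau$; values $()\mid(x.e,\theta)\mid\mathbf{inl}(v)\mid\mathbf{inr}(v)\mid(v_1,v_2)\mid\ell\mid\mathbf{Labeled}\,\ell\,v\mid(t,\theta)\mid n_\ell\mid n$; expressions: the pure constructs $x,\lambda x.e,e_1e_2,(),\ell$, pairs, projections, injections, $\mathbf{case}$, $e_1\sqsubseteq^?e_2$, and thunks $t::=\mathbf{return}(e)\mid\mathbf{bind}(e,x.e)\mid\mathbf{unlabel}(e)\mid\mathbf{toLabeled}(e)\mid\mathbf{labelOf}(e)\mid\mathbf{getLabel}\mid\mathbf{taint}(e)\mid\mathbf{new}(e)\mid!e\mid e_1:=e_2\mid\mathbf{labelOfRef}(e)$; stores map labels to lists of values, heaps are lists of $\mathbf{Labeled}\,\ell\,v$. Pure semantics $e\Downarrow^\theta v$: standard call-by-value environment semantics ($x\Downarrow\theta(x)$, $\lambda x.e\Downarrow(x.e,\theta)$, thunk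 $t\Downarrow(t,\theta)$, application of function closures, componentwise pairs/injections/projections, case on injections binding $x$, $e_1\sqsubseteq^?e_2$ yields $\mathbf{inl}(())$ if the labels satisfy $\ell_1\sqsubseteq\ell_2$ else $\mathbf{inr}(())$). Forcing: $\langle\Sigma,\mu,pc,e\rangle\Downarrow^\theta c'$ iff $e\Downarrow^\theta(t,\theta')$ and $\langle\Sigma,\mu,pc,t\rangle\Downarrow^{\theta'}c'$. Thunk rules (state unchanged unless said): $\mathbf{return}(e)$ gives $v$ where $e\Downarrow v$; $\mathbf{bind}(e_1,x.e_2)$ forces $e_1$ to get $\langle\Sigma',\mu',pc',v_1\rangle$ then forces $e_2$ in $\theta[x\mapsto v_1]$ from that state; $\mathbf{toLabeled}(e)$: forcing $e$ gives $\langle\Sigma',\mu',pc',v\rangle$, result $\langle\Sigma',\mu',pc,\mathbf{Labeled}\,pc'\,v\rangle$; $\mathbf{unlabel}(e)$ with $e\Downarrow\mathbf{Labeled}\,\ell\,v$ gives $v$ with program counter $pc\sqcup\ell$; $\mathbf{labelOf}(e)$ with $e\Downarrow\mathbf{Labeled}\,\ell\,v$ gives $\ell$ with program counter $pc\sqcup\ell$; $\mathbf{getLabel}$ gives $pc$; $\mathbf{taint}(e)$ with $e\Downarrow\ell$ gives $()$ with program counter $pc\sqcup\ell$; $\mathbf{Ref}\,I$: $\mathbf{new}(e)$ with $e\Downarrow\mathbf{Labeled}\,\ell\,v$, $pc\sqsubseteq\ell$, $n=|\Sigma(\ell)|$ gives $n_\ell$ and store $\Sigma[\ell\mapsto\Sigma(\ell)[n\mapsto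 v]]$; $!e$ with $e\Downarrow n_\ell$ gives $\Sigma(\ell)[n]$ with pc $pc\sqcup\ell$; $e_1:=e_2$ with $e_1\Downarrow n_{\ell_1}$, $e_2\Downarrow\mathbf{Labeled}\,\ell_2\,v$, $\ell_2\sqsubseteq\ell_1$, $pc\sqsubseteq\ell_1$ gives $()$ and store $\Sigma[\ell_1\mapsto\Sigma(\ell_1)[n\mapsto v]]$; $\mathbf{labelOfRef}(e)$ with $e\Downarrow n_\ell$ gives $\ell$ with pc $pc\sqcup\ell$; $\mathbf{Ref}\,S$: $\mathbf{new}(e)$ with $e\Downarrow\mathbf{Labeled}\,\ell\,v$, $pc\sqsubseteq\ell$, $n=|\mu|$ gives $n$ and heap $\mu[n\mapsto\mathbf{Labeled}\,\ell\,v]$; $!e$ with $e\Downarrow n$, $\mu[n]=\mathbf{Labeled}\,\ell\,v$ gives $v$ with pc $pc\sqcup\ell$; $\mathbf{labelOfRef}(e)$ likewise gives $\ell$ with pc $pc\sqcup\ell$; $e_1:=e_2$ with $e_1\Downarrow n$, $e_2\Downarrow\mathbf{Labeled}\,\ell'\,v$, $\mu[n]=\mathbf{Labeled}\,\ell\,v_0$, $pc\sqsubseteq\ell$ gives $()$ and heap $\mu[n\mapsto\mathbf{Labeled}\,(pc\sqcup\ell')\,v]$. Translation $\langle\!\langle\cdot\rangle\!\rangle$. Notation: $y\leftarrow e_1;e_2$ means $\mathbf{bind}(e_1,y.e_2)$ and $e_1;e_2$ means $\mathbf{bind}(e_1,y.e_2)$ with $y$ fresh; $\mathbf{if}\,e\,\mathbf{then}\,e_1\,\mathbf{else}\,e_2$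 means $\mathbf{case}(e,\_.e_1,\_.e_2)$. Expressions: $\langle\!\langle()\rangle\!\rangle=\mathbf{toLabeled}(\mathbf{return}(()))$; $\langle\!\langle\ell\rangle\!\rangle=\mathbf{toLabeled}(\mathbf{return}(\ell))$; $\langle\!\langle\lambda x.e\rangle\!\rangle=\mathbf{toLabeled}(\mathbf{return}(\lambda x.\langle\!\langle e\rangle\!\rangle))$; $\langle\!\langle\mathbf{inl}(e)\rangle\!\rangle=\mathbf{toLabeled}(lv\leftarrow\langle\!\langle e\rangle\!\rangle;\mathbf{return}(\mathbf{inl}(lv)))$, same for $\mathbf{inr}$; $\langle\!\langle(e_1,e_2)\rangle\!\rangle=\mathbf{toLabeled}(lv_1\leftarrow\langle\!\langle e_1\rangle\!\rangle;lv_2\leftarrow\langle\!\langle e_2\rangle\!\rangle;\mathbf{return}((lv_1,lv_2)))$; $\langle\!\langle x\rangle\!\rangle=\mathbf{toLabeled}(\mathbf{unlabel}(x))$; $\langle\!\langle e_1e_2\rangle\!\rangle=\mathbf{toLabeled}(lv_1\leftarrow\langle\!\langle e_1\rangle\!\rangle;lv_2\leftarrow\langle\!\langle e_2\rangle\!\rangle;v_1\leftarrow\mathbf{unlabel}(lv_1);lv\leftarrow v_1\,lv_2;\mathbf{unlabel}(lv))$; $\langle\!\langle\mathbf{case}(e,x.e_1,x.e_2)\rangle\!\rangle=\mathbf{toLabeled}(lv\leftarrow\langle\!\langle e\rangle\!\rangle;v\leftarrow\mathbf{unlabel}(lv);lv'\leftarrow\mathbf{case}(v,x.\langle\!\langle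 e_1\rangle\!\rangle,x.\langle\!\langle e_2\rangle\!\rangle);\mathbf{unlabel}(lv'))$; $\langle\!\langle\mathbf{fst}(e)\rangle\!\rangle=\mathbf{toLabeled}(lv\leftarrow\langle\!\langle e\rangle\!\rangle;v\leftarrow\mathbf{unlabel}(lv);\mathbf{unlabel}(\mathbf{fst}(v)))$, same for $\mathbf{snd}$; $\langle\!\langle e_1\sqsubseteq^?e_2\rangle\!\rangle=\mathbf{toLabeled}(lv_1\leftarrow\langle\!\langle e_1\rangle\!\rangle;lv_2\leftarrow\langle\!\langle e_2\rangle\!\rangle;lu\leftarrow\mathbf{toLabeled}(\mathbf{return}(()));v_1\leftarrow\mathbf{unlabel}(lv_1);v_2\leftarrow\mathbf{unlabel}(lv_2);\mathbf{return}(\mathbf{if}\,v_1\sqsubseteq^?v_2\,\mathbf{then}\,\mathbf{inl}(lu)\,\mathbf{else}\,\mathbf{inr}(lu)))$; $\langle\!\langle\mathbf{taint}(e_1,e_2)\rangle\!\rangle=\mathbf{toLabeled}(lv_1\leftarrow\langle\!\langle e_1\rangle\!\rangle;v_1\leftarrow\mathbf{unlabel}(lv_1);\mathbf{taint}(v_1);lv_2\leftarrow\langle\!\langle e_2\rangle\!\rangle;\mathbf{unlabel}(lv_2))$; $\langle\!\langle\mathbf{labelOf}(e)\rangle\!\rangle=\mathbf{toLabeled}(lv\leftarrow\langle\!\langle e\rangle\!\rangle;\mathbf{labelOf}(lv))$; $\langle\!\langle\mathbf{getLabel}\rangle\!\rangle=\mathbf{toLabeled}(\mathbf{getLabel})$;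 $\langle\!\langle\mathbf{new}(e)\rangle\!\rangle=\mathbf{toLabeled}(lv\leftarrow\langle\!\langle e\rangle\!\rangle;\mathbf{new}(lv))$; $\langle\!\langle!e\rangle\!\rangle=\mathbf{toLabeled}(lr\leftarrow\langle\!\langle e\rangle\!\rangle;r\leftarrow\mathbf{unlabel}(lr);!r)$; $\langle\!\langle e_1:=e_2\rangle\!\rangle=\mathbf{toLabeled}(lr\leftarrow\langle\!\langle e_1\rangle\!\rangle;lv\leftarrow\langle\!\langle e_2\rangle\!\rangle;r\leftarrow\mathbf{unlabel}(lr);r:=lv);\mathbf{toLabeled}(\mathbf{return}(()))$; $\langle\!\langle\mathbf{labelOfRef}(e)\rangle\!\rangle=\mathbf{toLabeled}(lr\leftarrow\langle\!\langle e\rangle\!\rangle;r\leftarrow\mathbf{unlabel}(lr);\mathbf{labelOfRef}(r))$. Here every nested translated subexpression $\langle\!\langle e_i\rangle\!\rangle$ (and the nested $\mathbf{toLabeled}(\mathbf{return}(()))$) is evaluated in an environment from which the auxiliary variables $lv,lv_1,lv_2,lv',lu,lr,r,v,v_1,v_2$ introduced by the translation have been removed (formally via a weakening construct $\mathbf{wken}(\bar x,e)$ that evaluates $e$ in $\theta$ with $\bar x$ removed from its domain), so that closures never capture them. Values: $\langle\!\langle r^\ell\rangle\!\rangle=\mathbf{Labeled}\,\ell\,\langle\!\langle r\rangle\!\rangle$; $\langle\!\langle()\rangle\!\rangle=()$, $\langle\!\langle\ell\rangle\!\rangle=\ell$, pairs and injections homomorphically; $\langle\!\langle(x.e,\theta)\rangle\!\rangle=(x.\langle\!\langle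 e\rangle\!\rangle,\langle\!\langle\theta\rangle\!\rangle)$; $\langle\!\langle n_\ell\rangle\!\rangle=n_\ell$; $\langle\!\langle n\rangle\!\rangle=n$. Environments pointwise, $\langle\!\langle\theta\rangle\!\rangle(x)=\langle\!\langle\theta(x)\rangle\!\rangle$; stores pointwise on each memory, translating each raw value $r$ to $\langle\!\langle r\rangle\!\rangle$; heaps pointwise, $\langle\!\langle r^\ell:\mu\rangle\!\rangle=\langle\!\langle r^\ell\rangle\!\rangle:\langle\!\langle\mu\rangle\!\rangle$. *)

theory Defs
  imports Main
begin

(* Labels form a lattice; we use a type variable 'l of class lattice,
   with \<le> as the flow relation and sup as join. *)

section \<open>Source calculus lambda^dFG\<close>

datatype rsort = RI | RS

datatype sty = STUnit | STFun sty sty | STSum sty sty | STProd sty sty | STLabel | STRef rsort sty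

(* Reference operations carry the sort s of their reference type, since the
   semantics of new / ! / := / labelOfRef is selected by the type Ref s tau. *)
datatype ('v, 'l) sexp =
    SVar 'v
  | SLam 'v "('v, 'l) sexp"
  | SApp "('v, 'l) sexp" "('v, 'l) sexp"
  | SUnit
  | SLbl 'l
  | SPair "('v, 'l) sexp" "('v, 'l) sexp"
  | SFst "('v, 'l) sexp"
  | SSnd "('v, 'l) sexp"
  | SInl "('v, 'l) sexp"
  | SInr "('v, 'l) sexp"
  | SCase "('v, 'l) sexp" 'v "('v, 'l) sexp" 'v "('v, 'l) sexp"
  | SGetLabel
  | SLabelOf "('v, 'l) sexp"
  | SLeq "('v, 'l) sexp" "('v, 'l) sexp"
  | STaint "('v, 'l) sexp" "('v, 'l) sexp"
  | SNew rsort "('v, 'l) sexp"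
  | SDeref rsort "('v, 'l) sexp"
  | SAssign rsort "('v, 'l) sexp" "('v, 'l) sexp"
  | SLabelOfRef rsort "('v, 'l) sexp"

inductive styping :: "('v \<Rightarrow> sty option) \<Rightarrow> ('v, 'l) sexp \<Rightarrow> sty \<Rightarrow> bool" where
  "\<Gamma> x = Some \<tau> \<Longrightarrow> styping \<Gamma> (SVar x) \<tau>"
| "styping (\<Gamma>(x \<mapsto> \<tau>1)) e \<tau>2 \<Longrightarrow> styping \<Gamma> (SLam x e) (STFun \<tau>1 \<tau>2)"
| "styping \<Gamma> e1 (STFun \<tau>1 \<tau>2) \<Longrightarrow> styping \<Gamma> e2 \<tau>1 \<Longrightarrow> styping \<Gamma> (SApp e1 e2) \<tau>2"
| "styping \<Gamma> SUnit STUnit"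
| "styping \<Gamma> (SLbl l) STLabel"
| "styping \<Gamma> e1 \<tau>1 \<Longrightarrow> styping \<Gamma> e2 \<tau>2 \<Longrightarrow> styping \<Gamma> (SPair e1 e2) (STProd \<tau>1 \<tau>2)"
| "styping \<Gamma> e (STProd \<tau>1 \<tau>2) \<Longrightarrow> styping \<Gamma> (SFst e) \<tau>1"
| "styping \<Gamma> e (STProd \<tau>1 \<tau>2) \<Longrightarrow> styping \<Gamma> (SSnd e) \<tau>2"
| "styping \<Gamma> e \<tau>1 \<Longrightarrow> styping \<Gamma> (SInl e) (STSum \<tau>1 \<tau>2)"
| "styping \<Gamma> e \<tau>2 \<Longrightarrow> styping \<Gamma> (SInr e) (STSum \<tau>1 \<tau>2)"
| "styping \<Gamma> e (STSum \<tau>1 \<tau>2) \<Longrightarrow> styping (\<Gamma>(x1 \<mapsto> \<tau>1)) e1 \<tau> \<Longrightarrow>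
   styping (\<Gamma>(x2 \<mapsto> \<tau>2)) e2 \<tau> \<Longrightarrow> styping \<Gamma> (SCase e x1 e1 x2 e2) \<tau>"
| "styping \<Gamma> SGetLabel STLabel"
| "styping \<Gamma> e \<tau> \<Longrightarrow> styping \<Gamma> (SLabelOf e) STLabel"
| "styping \<Gamma> e1 STLabel \<Longrightarrow> styping \<Gamma> e2 STLabel \<Longrightarrow> styping \<Gamma> (SLeq e1 e2) (STSum STUnit STUnit)"
| "styping \<Gamma> e1 STLabel \<Longrightarrow> styping \<Gamma> e2 \<tau> \<Longrightarrow> styping \<Gamma> (STaint e1 e2) \<tau>"
| "styping \<Gamma> e \<tau> \<Longrightarrow> styping \<Gamma> (SNew s e) (STRef s \<tau>)"
| "styping \<Gamma> e (STRef s \<tau>) \<Longrightarrow> styping \<Gamma> (SDeref s e) \<tau>"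
| "styping \<Gamma> e1 (STRef s \<tau>) \<Longrightarrow> styping \<Gamma> e2 \<tau> \<Longrightarrow> styping \<Gamma> (SAssign s e1 e2) STUnit"
| "styping \<Gamma> e (STRef s \<tau>) \<Longrightarrow> styping \<Gamma> (SLabelOfRef s e) STLabel"

datatype ('v, 'l) srval =
    RUnit
  | RClos 'v "('v, 'l) sexp" "'v \<Rightarrow> ('v, 'l) sval option"
  | RInl "('v, 'l) sval"
  | RInr "('v, 'l) sval"
  | RPair "('v, 'l) sval" "('v, 'l) sval"
  | RLbl 'l
  | RRefI nat 'l
  | RRefS nat
and ('v, 'l) sval = SV "('v, 'l) srval" 'l

type_synonym ('v, 'l) senv = "'v \<Rightarrow> ('v, 'l) sval option"
type_synonym ('v, 'l) sstore = "'l \<Rightarrow> ('v, 'l) srval list"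
type_synonym ('v, 'l) sheap = "('v, 'l) sval list"

fun sjoin :: "('v, 'l::lattice) sval \<Rightarrow> 'l \<Rightarrow> ('v, 'l) sval" where
  "sjoin (SV r l) l' = SV r (sup l l')"

(* X[n |-> y]: replacement, or append if n = |X| (only used when n \<le> |X|) *)
definition lupd :: "'a list \<Rightarrow> nat \<Rightarrow> 'a \<Rightarrow> 'a list" where
  "lupd X n y = (if n < length X then X[n := y] else X @ [y])"

(* seval theta pc Sigma mu e Sigma' mu' v  :  <Sigma,mu,e> \<Down>^theta_pc <Sigma',mu',v> *)
inductive seval :: "('v, 'l::lattice) senv \<Rightarrow> 'l \<Rightarrow> ('v, 'l) sstore \<Rightarrow> ('v, 'l) sheap \<Rightarrow> ('v, 'l) sexp
                     \<Rightarrow> ('v, 'l) sstore \<Rightarrow> ('v, 'l) sheap \<Rightarrow> ('v, 'l) sval \<Rightarrow> bool" where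
  SE_Var: "\<theta> x = Some v \<Longrightarrow> seval \<theta> pc \<Sigma> \<mu> (SVar x) \<Sigma> \<mu> (sjoin v pc)"
| SE_Unit: "seval \<theta> pc \<Sigma> \<mu> SUnit \<Sigma> \<mu> (SV RUnit pc)"
| SE_Lbl: "seval \<theta> pc \<Sigma> \<mu> (SLbl l) \<Sigma> \<mu> (SV (RLbl l) pc)"
| SE_Lam: "seval \<theta> pc \<Sigma> \<mu> (SLam x e) \<Sigma> \<mu> (SV (RClos x e \<theta>) pc)"
| SE_GetLabel: "seval \<theta> pc \<Sigma> \<mu> SGetLabel \<Sigma> \<mu> (SV (RLbl pc) pc)"
| SE_App: "seval \<theta> pc \<Sigma> \<mu> e1 \<Sigma>1 \<mu>1 (SV (RClos x e \<theta>') l) \<Longrightarrow>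
    seval \<theta> pc \<Sigma>1 \<mu>1 e2 \<Sigma>2 \<mu>2 v2 \<Longrightarrow>
    seval (\<theta>'(x \<mapsto> v2)) (sup pc l) \<Sigma>2 \<mu>2 e \<Sigma>3 \<mu>3 v \<Longrightarrow>
    seval \<theta> pc \<Sigma> \<mu> (SApp e1 e2) \<Sigma>3 \<mu>3 v"
| SE_Inl: "seval \<theta> pc \<Sigma> \<mu> e \<Sigma>' \<mu>' v \<Longrightarrow> seval \<theta> pc \<Sigma> \<mu> (SInl e) \<Sigma>' \<mu>' (SV (RInl v) pc)"
| SE_Inr: "seval \<theta> pc \<Sigma> \<mu> e \<Sigma>' \<mu>' v \<Longrightarrow> seval \<theta> pc \<Sigma> \<mu> (SInr e) \<Sigma>' \<mu>' (SV (RInr v) pc)"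
| SE_CaseL: "seval \<theta> pc \<Sigma> \<mu> e \<Sigma>1 \<mu>1 (SV (RInl v1) l) \<Longrightarrow>
    seval (\<theta>(x1 \<mapsto> v1)) (sup pc l) \<Sigma>1 \<mu>1 e1 \<Sigma>2 \<mu>2 v \<Longrightarrow>
    seval \<theta> pc \<Sigma> \<mu> (SCase e x1 e1 x2 e2) \<Sigma>2 \<mu>2 v"
| SE_CaseR: "seval \<theta> pc \<Sigma> \<mu> e \<Sigma>1 \<mu>1 (SV (RInr v2) l) \<Longrightarrow>
    seval (\<theta>(x2 \<mapsto> v2)) (sup pc l) \<Sigma>1 \<mu>1 e2 \<Sigma>2 \<mu>2 v \<Longrightarrow>
    seval \<theta> pc \<Sigma> \<mu> (SCase e x1 e1 x2 e2) \<Sigma>2 \<mu>2 v"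
| SE_Pair: "seval \<theta> pc \<Sigma> \<mu> e1 \<Sigma>1 \<mu>1 v1 \<Longrightarrow> seval \<theta> pc \<Sigma>1 \<mu>1 e2 \<Sigma>2 \<mu>2 v2 \<Longrightarrow>
    seval \<theta> pc \<Sigma> \<mu> (SPair e1 e2) \<Sigma>2 \<mu>2 (SV (RPair v1 v2) pc)"
| SE_Fst: "seval \<theta> pc \<Sigma> \<mu> e \<Sigma>' \<mu>' (SV (RPair v1 v2) l) \<Longrightarrow>
    seval \<theta> pc \<Sigma> \<mu> (SFst e) \<Sigma>' \<mu>' (sjoin v1 l)"
| SE_Snd: "seval \<theta> pc \<Sigma> \<mu> e \<Sigma>' \<mu>' (SV (RPair v1 v2) l) \<Longrightarrow>
    seval \<theta> pc \<Sigma> \<mu> (SSnd e) \<Sigma>' \<mu>' (sjoin v2 l)"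
| SE_LabelOf: "seval \<theta> pc \<Sigma> \<mu> e \<Sigma>' \<mu>' (SV r l) \<Longrightarrow>
    seval \<theta> pc \<Sigma> \<mu> (SLabelOf e) \<Sigma>' \<mu>' (SV (RLbl l) l)"
| SE_Leq: "seval \<theta> pc \<Sigma> \<mu> e1 \<Sigma>1 \<mu>1 (SV (RLbl l1) l1') \<Longrightarrow>
    seval \<theta> pc \<Sigma>1 \<mu>1 e2 \<Sigma>2 \<mu>2 (SV (RLbl l2) l2') \<Longrightarrow>
    seval \<theta> pc \<Sigma> \<mu> (SLeq e1 e2) \<Sigma>2 \<mu>2
      (SV (if l1 \<le> l2 then RInl (SV RUnit pc) else RInr (SV RUnit pc)) (sup l1' l2'))"
| SE_Taint: "seval \<theta> pc \<Sigma> \<mu> e1 \<Sigma>1 \<mu>1 (SV (RLbl l) l') \<Longrightarrow> l' \<le> l \<Longrightarrow>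
    seval \<theta> l \<Sigma>1 \<mu>1 e2 \<Sigma>2 \<mu>2 v \<Longrightarrow>
    seval \<theta> pc \<Sigma> \<mu> (STaint e1 e2) \<Sigma>2 \<mu>2 v"
| SE_NewI: "seval \<theta> pc \<Sigma> \<mu> e \<Sigma>' \<mu>' (SV r l) \<Longrightarrow> n = length (\<Sigma>' l) \<Longrightarrow>
    seval \<theta> pc \<Sigma> \<mu> (SNew RI e) (\<Sigma>'(l := lupd (\<Sigma>' l) n r)) \<mu>' (SV (RRefI n l) pc)"
| SE_DerefI: "seval \<theta> pc \<Sigma> \<mu> e \<Sigma>' \<mu>' (SV (RRefI n l) l') \<Longrightarrow> n < length (\<Sigma>' l) \<Longrightarrow>
    \<Sigma>' l ! n = r \<Longrightarrow>
    seval \<theta> pc \<Sigma> \<mu> (SDeref RI e) \<Sigma>' \<mu>' (SV r (sup l l'))"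
| SE_AssignI: "seval \<theta> pc \<Sigma> \<mu> e1 \<Sigma>' \<mu>' (SV (RRefI n l) l1) \<Longrightarrow> l1 \<le> l \<Longrightarrow>
    seval \<theta> pc \<Sigma>' \<mu>' e2 \<Sigma>'' \<mu>'' (SV r l2) \<Longrightarrow> l2 \<le> l \<Longrightarrow> n \<le> length (\<Sigma>'' l) \<Longrightarrow>
    seval \<theta> pc \<Sigma> \<mu> (SAssign RI e1 e2) (\<Sigma>''(l := lupd (\<Sigma>'' l) n r)) \<mu>'' (SV RUnit pc)"
| SE_LabelOfRefI: "seval \<theta> pc \<Sigma> \<mu> e \<Sigma>' \<mu>' (SV (RRefI n l) l') \<Longrightarrow>
    seval \<theta> pc \<Sigma> \<mu> (SLabelOfRef RI e) \<Sigma>' \<mu>' (SV (RLbl l) (sup l l'))"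
| SE_NewS: "seval \<theta> pc \<Sigma> \<mu> e \<Sigma>' \<mu>' v \<Longrightarrow> n = length \<mu>' \<Longrightarrow>
    seval \<theta> pc \<Sigma> \<mu> (SNew RS e) \<Sigma>' (lupd \<mu>' n v) (SV (RRefS n) pc)"
| SE_DerefS: "seval \<theta> pc \<Sigma> \<mu> e \<Sigma>' \<mu>' (SV (RRefS n) l) \<Longrightarrow> n < length \<mu>' \<Longrightarrow>
    \<mu>' ! n = SV r l' \<Longrightarrow>
    seval \<theta> pc \<Sigma> \<mu> (SDeref RS e) \<Sigma>' \<mu>' (SV r (sup l l'))"
| SE_LabelOfRefS: "seval \<theta> pc \<Sigma> \<mu> e \<Sigma>' \<mu>' (SV (RRefS n) l1) \<Longrightarrow> n < length \<mu>' \<Longrightarrow>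
    \<mu>' ! n = SV r l2 \<Longrightarrow>
    seval \<theta> pc \<Sigma> \<mu> (SLabelOfRef RS e) \<Sigma>' \<mu>' (SV (RLbl l2) (sup l1 l2))"
| SE_AssignS: "seval \<theta> pc \<Sigma> \<mu> e1 \<Sigma>' \<mu>' (SV (RRefS n) l) \<Longrightarrow>
    seval \<theta> pc \<Sigma>' \<mu>' e2 \<Sigma>'' \<mu>'' (SV r2 l2) \<Longrightarrow> n < length \<mu>'' \<Longrightarrow>
    \<mu>'' ! n = SV r1 l1 \<Longrightarrow> l \<le> l1 \<Longrightarrow>
    seval \<theta> pc \<Sigma> \<mu> (SAssign RS e1 e2) \<Sigma>'' (\<mu>''[n := SV r2 (sup l2 l)]) (SV RUnit pc)"

section \<open>Target calculus lambda^dCG\<close>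

(* auxiliary variable names introduced by the translation; Y is the fresh
   variable of "e1; e2" and of the wildcard binders of if-then-else *)
datatype aux = LV | LV1 | LV2 | LV' | LU | LR | R | VV | V1 | V2 | Y

datatype 'v tvar = Src 'v | Aux aux

datatype ('v, 'l) texp =
    TVar "'v tvar"
  | TLam "'v tvar" "('v, 'l) texp"
  | TApp "('v, 'l) texp" "('v, 'l) texp"
  | TUnit
  | TLbl 'l
  | TPair "('v, 'l) texp" "('v, 'l) texp"
  | TFst "('v, 'l) texp"
  | TSnd "('v, 'l) texp"
  | TInl "('v, 'l) texp"
  | TInr "('v, 'l) texp"
  | TCase "('v, 'l) texp" "'v tvar" "('v, 'l) texp" "'v tvar" "('v, 'l) texp"
  | TLeq "('v, 'l) texp" "('v, 'l) texp"
  | TThunk "('v, 'l) thunk"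
  | TWken "('v, 'l) texp"   (* evaluates its argument with all auxiliary variables removed *)
and ('v, 'l) thunk =
    Return "('v, 'l) texp"
  | Bind "('v, 'l) texp" "'v tvar" "('v, 'l) texp"
  | Unlabel "('v, 'l) texp"
  | ToLabeled "('v, 'l) texp"
  | TLabelOf "('v, 'l) texp"
  | TGetLabel
  | TTaint "('v, 'l) texp"
  | TNew rsort "('v, 'l) texp"
  | TDeref rsort "('v, 'l) texp"
  | TAssign rsort "('v, 'l) texp" "('v, 'l) texp"
  | TLabelOfRef rsort "('v, 'l) texp"

datatype ('v, 'l) tval =
    VUnit
  | VClos "'v tvar" "('v, 'l) texp" "'v tvar \<Rightarrow> ('v, 'l) tval option"
  | VInl "('v, 'l) tval"
  | VInr "('v, 'l) tval"
  | VPair "('v, 'l) tval" "('v, 'l) tval"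
  | VLbl 'l
  | VLabeled 'l "('v, 'l) tval"
  | VThunk "('v, 'l) thunk" "'v tvar \<Rightarrow> ('v, 'l) tval option"
  | VRefI nat 'l
  | VRefS nat

type_synonym ('v, 'l) tenv = "'v tvar \<Rightarrow> ('v, 'l) tval option"
type_synonym ('v, 'l) tstore = "'l \<Rightarrow> ('v, 'l) tval list"
(* heap entries Labeled l v, represented as pairs (l, v) *)
type_synonym ('v, 'l) theap = "('l \<times> ('v, 'l) tval) list"

definition drop_aux :: "('v, 'l) tenv \<Rightarrow> ('v, 'l) tenv" where
  "drop_aux \<theta> = (\<lambda>x. case x of Src y \<Rightarrow> \<theta> (Src y) | Aux _ \<Rightarrow> None)"

inductive peval :: "('v, 'l::lattice) tenv \<Rightarrow> ('v, 'l) texp \<Rightarrow> ('v, 'l) tval \<Rightarrow> bool" where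
  "\<theta> x = Some v \<Longrightarrow> peval \<theta> (TVar x) v"
| "peval \<theta> (TLam x e) (VClos x e \<theta>)"
| "peval \<theta> e1 (VClos x e \<theta>') \<Longrightarrow> peval \<theta> e2 v2 \<Longrightarrow> peval (\<theta>'(x \<mapsto> v2)) e v \<Longrightarrow>
   peval \<theta> (TApp e1 e2) v"
| "peval \<theta> TUnit VUnit"
| "peval \<theta> (TLbl l) (VLbl l)"
| "peval \<theta> e1 v1 \<Longrightarrow> peval \<theta> e2 v2 \<Longrightarrow> peval \<theta> (TPair e1 e2) (VPair v1 v2)"
| "peval \<theta> e (VPair v1 v2) \<Longrightarrow> peval \<theta> (TFst e) v1"
| "peval \<theta> e (VPair v1 v2) \<Longrightarrow> peval \<theta> (TSnd e) v2"
| "peval \<theta> e v \<Longrightarrow> peval \<theta> (TInl e) (VInl v)"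
| "peval \<theta> e v \<Longrightarrow> peval \<theta> (TInr e) (VInr v)"
| "peval \<theta> e (VInl v1) \<Longrightarrow> peval (\<theta>(x1 \<mapsto> v1)) e1 v \<Longrightarrow> peval \<theta> (TCase e x1 e1 x2 e2) v"
| "peval \<theta> e (VInr v2) \<Longrightarrow> peval (\<theta>(x2 \<mapsto> v2)) e2 v \<Longrightarrow> peval \<theta> (TCase e x1 e1 x2 e2) v"
| "peval \<theta> e1 (VLbl l1) \<Longrightarrow> peval \<theta> e2 (VLbl l2) \<Longrightarrow>
   peval \<theta> (TLeq e1 e2) (if l1 \<le> l2 then VInl VUnit else VInr VUnit)"
| "peval \<theta> (TThunk t) (VThunk t \<theta>)"
| "peval (drop_aux \<theta>) e v \<Longrightarrow> peval \<theta> (TWken e) v"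

(* force theta Sigma mu pc e Sigma' mu' pc' v :  <Sigma,mu,pc,e> \<Down>^theta <Sigma',mu',pc',v> *)
inductive force :: "('v, 'l::lattice) tenv \<Rightarrow> ('v, 'l) tstore \<Rightarrow> ('v, 'l) theap \<Rightarrow> 'l \<Rightarrow> ('v, 'l) texp
          \<Rightarrow> ('v, 'l) tstore \<Rightarrow> ('v, 'l) theap \<Rightarrow> 'l \<Rightarrow> ('v, 'l) tval \<Rightarrow> bool"
  and teval :: "('v, 'l::lattice) tenv \<Rightarrow> ('v, 'l) tstore \<Rightarrow> ('v, 'l) theap \<Rightarrow> 'l \<Rightarrow> ('v, 'l) thunk
          \<Rightarrow> ('v, 'l) tstore \<Rightarrow> ('v, 'l) theap \<Rightarrow> 'l \<Rightarrow> ('v, 'l) tval \<Rightarrow> bool" where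
  Force: "peval \<theta> e (VThunk t \<theta>') \<Longrightarrow> teval \<theta>' \<Sigma> \<mu> pc t \<Sigma>' \<mu>' pc' v \<Longrightarrow>
    force \<theta> \<Sigma> \<mu> pc e \<Sigma>' \<mu>' pc' v"
| TE_Return: "peval \<theta> e v \<Longrightarrow> teval \<theta> \<Sigma> \<mu> pc (Return e) \<Sigma> \<mu> pc v"
| TE_Bind: "force \<theta> \<Sigma> \<mu> pc e1 \<Sigma>1 \<mu>1 pc1 v1 \<Longrightarrow> force (\<theta>(x \<mapsto> v1)) \<Sigma>1 \<mu>1 pc1 e2 \<Sigma>2 \<mu>2 pc2 v \<Longrightarrow>
    teval \<theta> \<Sigma> \<mu> pc (Bind e1 x e2) \<Sigma>2 \<mu>2 pc2 v"
| TE_ToLabeled: "force \<theta> \<Sigma> \<mu> pc e \<Sigma>' \<mu>' pc' v \<Longrightarrow>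
    teval \<theta> \<Sigma> \<mu> pc (ToLabeled e) \<Sigma>' \<mu>' pc (VLabeled pc' v)"
| TE_Unlabel: "peval \<theta> e (VLabeled l v) \<Longrightarrow> teval \<theta> \<Sigma> \<mu> pc (Unlabel e) \<Sigma> \<mu> (sup pc l) v"
| TE_LabelOf: "peval \<theta> e (VLabeled l v) \<Longrightarrow> teval \<theta> \<Sigma> \<mu> pc (TLabelOf e) \<Sigma> \<mu> (sup pc l) (VLbl l)"
| TE_GetLabel: "teval \<theta> \<Sigma> \<mu> pc TGetLabel \<Sigma> \<mu> pc (VLbl pc)"
| TE_Taint: "peval \<theta> e (VLbl l) \<Longrightarrow> teval \<theta> \<Sigma> \<mu> pc (TTaint e) \<Sigma> \<mu> (sup pc l) VUnit"
| TE_NewI: "peval \<theta> e (VLabeled l v) \<Longrightarrow> pc \<le> l \<Longrightarrow> n = length (\<Sigma> l) \<Longrightarrow>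
    teval \<theta> \<Sigma> \<mu> pc (TNew RI e) (\<Sigma>(l := lupd (\<Sigma> l) n v)) \<mu> pc (VRefI n l)"
| TE_DerefI: "peval \<theta> e (VRefI n l) \<Longrightarrow> n < length (\<Sigma> l) \<Longrightarrow>
    teval \<theta> \<Sigma> \<mu> pc (TDeref RI e) \<Sigma> \<mu> (sup pc l) (\<Sigma> l ! n)"
| TE_AssignI: "peval \<theta> e1 (VRefI n l1) \<Longrightarrow> peval \<theta> e2 (VLabeled l2 v) \<Longrightarrow> l2 \<le> l1 \<Longrightarrow>
    pc \<le> l1 \<Longrightarrow> n \<le> length (\<Sigma> l1) \<Longrightarrow>
    teval \<theta> \<Sigma> \<mu> pc (TAssign RI e1 e2) (\<Sigma>(l1 := lupd (\<Sigma> l1) n v)) \<mu> pc VUnit"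
| TE_LabelOfRefI: "peval \<theta> e (VRefI n l) \<Longrightarrow>
    teval \<theta> \<Sigma> \<mu> pc (TLabelOfRef RI e) \<Sigma> \<mu> (sup pc l) (VLbl l)"
| TE_NewS: "peval \<theta> e (VLabeled l v) \<Longrightarrow> pc \<le> l \<Longrightarrow> n = length \<mu> \<Longrightarrow>
    teval \<theta> \<Sigma> \<mu> pc (TNew RS e) \<Sigma> (lupd \<mu> n (l, v)) pc (VRefS n)"
| TE_DerefS: "peval \<theta> e (VRefS n) \<Longrightarrow> n < length \<mu> \<Longrightarrow> \<mu> ! n = (l, v) \<Longrightarrow>
    teval \<theta> \<Sigma> \<mu> pc (TDeref RS e) \<Sigma> \<mu> (sup pc l) v"
| TE_LabelOfRefS: "peval \<theta> e (VRefS n) \<Longrightarrow> n < length \<mu> \<Longrightarrow> \<mu> ! n = (l, v) \<Longrightarrow>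
    teval \<theta> \<Sigma> \<mu> pc (TLabelOfRef RS e) \<Sigma> \<mu> (sup pc l) (VLbl l)"
| TE_AssignS: "peval \<theta> e1 (VRefS n) \<Longrightarrow> peval \<theta> e2 (VLabeled l' v) \<Longrightarrow> n < length \<mu> \<Longrightarrow>
    \<mu> ! n = (l, v0) \<Longrightarrow> pc \<le> l \<Longrightarrow>
    teval \<theta> \<Sigma> \<mu> pc (TAssign RS e1 e2) \<Sigma> (\<mu>[n := (sup pc l', v)]) pc VUnit"

section \<open>Translation\<close>

abbreviation (input) bnd :: "('v, 'l) texp \<Rightarrow> aux \<Rightarrow> ('v, 'l) texp \<Rightarrow> ('v, 'l) texp" where
  "bnd e1 x e2 \<equiv> TThunk (Bind e1 (Aux x) e2)"
abbreviation (input) sq :: "('v, 'l) texp \<Rightarrow> ('v, 'l) texp \<Rightarrow> ('v, 'l) texp" where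
  "sq e1 e2 \<equiv> TThunk (Bind e1 (Aux Y) e2)"
abbreviation (input) tolab :: "('v, 'l) texp \<Rightarrow> ('v, 'l) texp" where
  "tolab e \<equiv> TThunk (ToLabeled e)"
abbreviation (input) ret :: "('v, 'l) texp \<Rightarrow> ('v, 'l) texp" where
  "ret e \<equiv> TThunk (Return e)"
abbreviation (input) unl :: "('v, 'l) texp \<Rightarrow> ('v, 'l) texp" where
  "unl e \<equiv> TThunk (Unlabel e)"
abbreviation (input) av :: "aux \<Rightarrow> ('v, 'l) texp" where
  "av x \<equiv> TVar (Aux x)"

fun tr :: "('v, 'l) sexp \<Rightarrow> ('v, 'l) texp" where
  "tr SUnit = tolab (ret TUnit)"
| "tr (SLbl l) = tolab (ret (TLbl l))"
| "tr (SLam x e) = tolab (ret (TLam (Src x) (tr e)))"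
| "tr (SInl e) = tolab (bnd (TWken (tr e)) LV (ret (TInl (av LV))))"
| "tr (SInr e) = tolab (bnd (TWken (tr e)) LV (ret (TInr (av LV))))"
| "tr (SPair e1 e2) = tolab (bnd (TWken (tr e1)) LV1 (bnd (TWken (tr e2)) LV2
      (ret (TPair (av LV1) (av LV2)))))"
| "tr (SVar x) = tolab (unl (TVar (Src x)))"
| "tr (SApp e1 e2) = tolab (bnd (TWken (tr e1)) LV1 (bnd (TWken (tr e2)) LV2
      (bnd (unl (av LV1)) V1 (bnd (TApp (av V1) (av LV2)) LV (unl (av LV))))))"
| "tr (SCase e x1 e1 x2 e2) = tolab (bnd (TWken (tr e)) LV (bnd (unl (av LV)) VV
      (bnd (TCase (av VV) (Src x1) (TWken (tr e1)) (Src x2) (TWken (tr e2))) LV' (unl (av LV')))))"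
| "tr (SFst e) = tolab (bnd (TWken (tr e)) LV (bnd (unl (av LV)) VV (unl (TFst (av VV)))))"
| "tr (SSnd e) = tolab (bnd (TWken (tr e)) LV (bnd (unl (av LV)) VV (unl (TSnd (av VV)))))"
| "tr (SLeq e1 e2) = tolab (bnd (TWken (tr e1)) LV1 (bnd (TWken (tr e2)) LV2
      (bnd (TWken (tolab (ret TUnit))) LU (bnd (unl (av LV1)) V1 (bnd (unl (av LV2)) V2
      (ret (TCase (TLeq (av V1) (av V2)) (Aux Y) (TInl (av LU)) (Aux Y) (TInr (av LU)))))))))"
| "tr (STaint e1 e2) = tolab (bnd (TWken (tr e1)) LV1 (bnd (unl (av LV1)) V1
      (sq (TThunk (TTaint (av V1))) (bnd (TWken (tr e2)) LV2 (unl (av LV2))))))"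
| "tr (SLabelOf e) = tolab (bnd (TWken (tr e)) LV (TThunk (TLabelOf (av LV))))"
| "tr SGetLabel = tolab (TThunk TGetLabel)"
| "tr (SNew s e) = tolab (bnd (TWken (tr e)) LV (TThunk (TNew s (av LV))))"
| "tr (SDeref s e) = tolab (bnd (TWken (tr e)) LR (bnd (unl (av LR)) R (TThunk (TDeref s (av R)))))"
| "tr (SAssign s e1 e2) = sq (tolab (bnd (TWken (tr e1)) LR (bnd (TWken (tr e2)) LV
      (bnd (unl (av LR)) R (TThunk (TAssign s (av R) (av LV))))))) (TWken (tolab (ret TUnit)))"
| "tr (SLabelOfRef s e) = tolab (bnd (TWken (tr e)) LR (bnd (unl (av LR)) R
      (TThunk (TLabelOfRef s (av R)))))"

primrec tr_rval :: "('v, 'l) srval \<Rightarrow> ('v, 'l) tval"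
  and tr_val :: "('v, 'l) sval \<Rightarrow> ('v, 'l) tval" where
  "tr_rval RUnit = VUnit"
| "tr_rval (RClos x e \<theta>) = VClos (Src x) (tr e)
     (\<lambda>y. case y of Src z \<Rightarrow> map_option tr_val (\<theta> z) | Aux _ \<Rightarrow> None)"
| "tr_rval (RInl v) = VInl (tr_val v)"
| "tr_rval (RInr v) = VInr (tr_val v)"
| "tr_rval (RPair v1 v2) = VPair (tr_val v1) (tr_val v2)"
| "tr_rval (RLbl l) = VLbl l"
| "tr_rval (RRefI n l) = VRefI n l"
| "tr_rval (RRefS n) = VRefS n"
| "tr_val (SV r l) = VLabeled l (tr_rval r)"

definition tr_env :: "('v, 'l) senv \<Rightarrow> ('v, 'l) tenv" where
  "tr_env \<theta> = (\<lambda>y. case y of Src z \<Rightarrow> map_option tr_val (\<theta> z) | Aux _ \<Rightarrow> None)"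

definition tr_store :: "('v, 'l) sstore \<Rightarrow> ('v, 'l) tstore" where
  "tr_store \<Sigma> = (\<lambda>l. map tr_rval (\<Sigma> l))"

fun tr_hentry :: "('v, 'l) sval \<Rightarrow> 'l \<times> ('v, 'l) tval" where
  "tr_hentry (SV r l) = (l, tr_rval r)"

definition tr_heap :: "('v, 'l) sheap \<Rightarrow> ('v, 'l) theap" where
  "tr_heap \<mu> = map tr_hentry \<mu>"

end

theory Submission
  imports Defs
begin

fun slab :: "('v, 'l) sval \<Rightarrow> 'l" where "slab (SV r l) = l"

lemma slab_sjoin[simp]: "slab (sjoin v l) = sup (slab v) l"
  by (cases v) auto

lemma seval_pc: "seval \<theta> pc \<Sigma> \<mu> e \<Sigma>' \<mu>' v \<Longrightarrow> pc \<le> slab v"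
  by (induction rule: seval.induct) (auto intro: le_supI1 le_supI2 order_trans)

lemma tr_rval_clos[simp]: "tr_rval (RClos x e \<theta>) = VClos (Src x) (tr e) (tr_env \<theta>)"
  by (simp add: tr_env_def)
declare tr_rval.simps(2)[simp del]

lemma drop_aux_aux[simp]: "drop_aux (\<theta>(Aux a \<mapsto> v)) = drop_aux \<theta>"
  by (rule ext) (auto simp: drop_aux_def split: tvar.split)
lemma drop_aux_src[simp]: "drop_aux (\<theta>(Src a \<mapsto> v)) = (drop_aux \<theta>)(Src a \<mapsto> v)"
  by (rule ext) (auto simp: drop_aux_def split: tvar.split)
lemma drop_aux_tr[simp]: "drop_aux (tr_env \<theta>) = tr_env \<theta>"
  by (rule ext) (auto simp: drop_aux_def tr_env_def split: tvar.split)
lemma tr_env_upd[simp]: "tr_env (\<theta>(x \<mapsto> v)) = (tr_env \<theta>)(Src x \<mapsto> tr_val v)"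
  by (rule ext) (auto simp: tr_env_def split: tvar.split)
lemma tr_env_upd2[simp]: "tr_env (\<lambda>a. if a = x then Some v else \<theta> a) = (tr_env \<theta>)(Src x \<mapsto> tr_val v)"
  by (rule ext) (auto simp: tr_env_def split: tvar.split)
lemma tr_env_src[simp]: "tr_env \<theta> (Src x) = map_option tr_val (\<theta> x)"
  by (simp add: tr_env_def)

lemma F_th: "teval \<theta> \<Sigma> \<mu> pc t \<Sigma>' \<mu>' pc' v \<Longrightarrow> force \<theta> \<Sigma> \<mu> pc (TThunk t) \<Sigma>' \<mu>' pc' v"
  by (rule Force) (rule peval.intros)

lemma F_wk: "force (drop_aux \<theta>) \<Sigma> \<mu> pc e \<Sigma>' \<mu>' pc' v \<Longrightarrow> force \<theta> \<Sigma> \<mu> pc (TWken e) \<Sigma>' \<mu>' pc' v"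
  by (erule force.cases) (auto intro: Force peval.intros)

lemma F_bind: "force \<theta> \<Sigma> \<mu> pc e1 \<Sigma>1 \<mu>1 pc1 v1 \<Longrightarrow> force (\<theta>(x \<mapsto> v1)) \<Sigma>1 \<mu>1 pc1 e2 \<Sigma>2 \<mu>2 pc2 v \<Longrightarrow>
   force \<theta> \<Sigma> \<mu> pc (TThunk (Bind e1 x e2)) \<Sigma>2 \<mu>2 pc2 v"
  by (intro F_th TE_Bind)

lemma F_tolab: "force \<theta> \<Sigma> \<mu> pc e \<Sigma>' \<mu>' pc' v \<Longrightarrow>
   force \<theta> \<Sigma> \<mu> pc (TThunk (ToLabeled e)) \<Sigma>' \<mu>' pc (VLabeled pc' v)"
  by (intro F_th TE_ToLabeled)

lemma F_ret: "peval \<theta> e v \<Longrightarrow> force \<theta> \<Sigma> \<mu> pc (TThunk (Return e)) \<Sigma> \<mu> pc v"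
  by (intro F_th TE_Return)

lemma pv: "\<theta> x = Some v \<Longrightarrow> peval \<theta> (TVar x) v"
  by (rule peval.intros)

lemma F_unl: "\<theta> x = Some (VLabeled l v) \<Longrightarrow> force \<theta> \<Sigma> \<mu> pc (TThunk (Unlabel (TVar x))) \<Sigma> \<mu> (sup pc l) v"
  by (intro F_th TE_Unlabel pv)

lemma F_app: "peval \<theta> e1 (VClos x e \<theta>') \<Longrightarrow> peval \<theta> e2 v2 \<Longrightarrow>
   force (\<theta>'(x \<mapsto> v2)) \<Sigma> \<mu> pc e \<Sigma>' \<mu>' pc' v \<Longrightarrow> force \<theta> \<Sigma> \<mu> pc (TApp e1 e2) \<Sigma>' \<mu>' pc' v"
  by (erule force.cases) (auto intro: Force peval.intros)

lemma F_caseL: "peval \<theta> e (VInl v1) \<Longrightarrow>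
   force (\<theta>(x1 \<mapsto> v1)) \<Sigma> \<mu> pc e1 \<Sigma>' \<mu>' pc' v \<Longrightarrow> force \<theta> \<Sigma> \<mu> pc (TCase e x1 e1 x2 e2) \<Sigma>' \<mu>' pc' v"
  by (erule force.cases) (auto intro: Force peval.intros)

lemma F_caseR: "peval \<theta> e (VInr v2) \<Longrightarrow>
   force (\<theta>(x2 \<mapsto> v2)) \<Sigma> \<mu> pc e2 \<Sigma>' \<mu>' pc' v \<Longrightarrow> force \<theta> \<Sigma> \<mu> pc (TCase e x1 e1 x2 e2) \<Sigma>' \<mu>' pc' v"
  by (erule force.cases) (auto intro: Force peval.intros)


lemma F_pc: "force \<theta> \<Sigma> \<mu> pc e \<Sigma>' \<mu>' pc' v \<Longrightarrow> pc' = pc'' \<Longrightarrow> force \<theta> \<Sigma> \<mu> pc e \<Sigma>' \<mu>' pc'' v"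
  by simp

lemma F_eq: "force \<theta> \<Sigma> \<mu> pc e \<Sigma>' \<mu>' pc' v \<Longrightarrow> pc' = pc'' \<Longrightarrow> v = v'' \<Longrightarrow> force \<theta> \<Sigma> \<mu> pc e \<Sigma>' \<mu>' pc'' v''"
  by simp

lemma pv_fst: "\<theta> x = Some (VPair a b) \<Longrightarrow> peval \<theta> (TFst (TVar x)) a"
  by (rule peval.intros, rule pv)
lemma pv_snd: "\<theta> x = Some (VPair a b) \<Longrightarrow> peval \<theta> (TSnd (TVar x)) b"
  by (rule peval.intros, rule pv)

lemma map_lupd: "map f (lupd X n y) = lupd (map f X) n (f y)"
  by (simp add: lupd_def map_update)
lemma tr_store_upd: "tr_store (\<Sigma>(l := xs)) = (tr_store \<Sigma>)(l := map tr_rval xs)"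
  by (rule ext) (simp add: tr_store_def)

lemma tr_store_upd2: "tr_store (\<lambda>a. if a = l then xs else \<Sigma> a) = (tr_store \<Sigma>)(l := map tr_rval xs)"
  by (rule ext) (simp add: tr_store_def)

lemma tr_store_app: "tr_store \<Sigma> l = map tr_rval (\<Sigma> l)"
  by (simp add: tr_store_def)

lemma sup_abs: "(a::'l::lattice) \<le> c \<Longrightarrow> sup (sup a c) b = sup b c"
  by (metis sup.absorb_iff2 sup.assoc sup.commute sup.left_commute)

lemma sup_abs': "(a::'l::lattice) \<le> c \<Longrightarrow> sup (sup a c) b = sup c b"
  by (simp add: sup.absorb2)

lemma tr_main: "seval \<theta> pc \<Sigma> \<mu> e \<Sigma>' \<mu>' v \<Longrightarrow>
   force (tr_env \<theta>) (tr_store \<Sigma>) (tr_heap \<mu>) pc (tr e) (tr_store \<Sigma>') (tr_heap \<mu>') pc (tr_val v)"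
proof (induction rule: seval.induct)
  case (SE_Var \<theta> x v pc \<Sigma> \<mu>)
  obtain r l where v: "v = SV r l" by (cases v)
  with SE_Var have "tr_env \<theta> (Src x) = Some (VLabeled l (tr_rval r))" by simp
  from F_tolab[OF F_unl[of "tr_env \<theta>" "Src x", OF this]] show ?case using v by simp (metis sup.commute)
next
  case (SE_Unit \<theta> pc \<Sigma> \<mu>)
  show ?case by (simp, intro F_tolab F_ret peval.intros)
next
  case (SE_Lbl \<theta> pc \<Sigma> \<mu> l)
  show ?case by (simp, intro F_tolab F_ret peval.intros)
next
  case (SE_Lam \<theta> pc \<Sigma> \<mu> x e)
  show ?case by (simp, intro F_tolab F_ret peval.intros)
next
  case (SE_GetLabel \<theta> pc \<Sigma> \<mu>)
  show ?case by (simp, intro F_tolab F_th TE_GetLabel)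
next
  case (SE_App \<theta> pc \<Sigma> \<mu> e1 \<Sigma>1 \<mu>1 x e \<theta>' l e2 \<Sigma>2 \<mu>2 v2 \<Sigma>3 \<mu>3 v)
  obtain r3 l3 where v: "v = SV r3 l3" by (cases v)
  have le: "sup pc l \<le> l3" using seval_pc[OF SE_App.hyps(3)] v by simp
  let ?T = "tr_env \<theta>"
  let ?C = "VClos (Src x) (tr e) (tr_env \<theta>')"
  let ?T1 = "?T(Aux LV1 \<mapsto> VLabeled l ?C)"
  let ?T2 = "?T1(Aux LV2 \<mapsto> tr_val v2)"
  let ?T3 = "?T2(Aux V1 \<mapsto> ?C)"
  let ?T4 = "?T3(Aux LV \<mapsto> VLabeled l3 (tr_rval r3))"
  have a1: "force ?T (tr_store \<Sigma>) (tr_heap \<mu>) pc (TWken (tr e1)) (tr_store \<Sigma>1) (tr_heap \<mu>1) pc (VLabeled l ?C)"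
    using SE_App.IH(1) by (intro F_wk) simp
  have a2: "force ?T1 (tr_store \<Sigma>1) (tr_heap \<mu>1) pc (TWken (tr e2)) (tr_store \<Sigma>2) (tr_heap \<mu>2) pc (tr_val v2)"
    using SE_App.IH(2) by (intro F_wk) simp
  have a3: "force ?T2 (tr_store \<Sigma>2) (tr_heap \<mu>2) pc (TThunk (Unlabel (TVar (Aux LV1)))) (tr_store \<Sigma>2) (tr_heap \<mu>2) (sup pc l) ?C"
    by (rule F_unl) simp
  have "force ((tr_env \<theta>')(Src x \<mapsto> tr_val v2)) (tr_store \<Sigma>2) (tr_heap \<mu>2) (sup pc l) (tr e) (tr_store \<Sigma>3) (tr_heap \<mu>3) (sup pc l) (VLabeled l3 (tr_rval r3))"
    using SE_App.IH(3) v by (simp add: fun_upd_def)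
  then have a4: "force ?T3 (tr_store \<Sigma>2) (tr_heap \<mu>2) (sup pc l) (TApp (TVar (Aux V1)) (TVar (Aux LV2))) (tr_store \<Sigma>3) (tr_heap \<mu>3) (sup pc l) (VLabeled l3 (tr_rval r3))"
    by (rule F_app[rotated 2]) (rule pv, simp)+
  have a5: "force ?T4 (tr_store \<Sigma>3) (tr_heap \<mu>3) (sup pc l) (TThunk (Unlabel (TVar (Aux LV)))) (tr_store \<Sigma>3) (tr_heap \<mu>3) l3 (tr_rval r3)"
    by (rule F_pc[OF F_unl]) (simp, simp_all add: sup.absorb2[OF le])
  show ?case using F_tolab[OF F_bind[OF a1 F_bind[OF a2 F_bind[OF a3 F_bind[OF a4 a5]]]]] v by simp
next
  case (SE_Inl \<theta> pc \<Sigma> \<mu> e \<Sigma>' \<mu>' v)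
  have a1: "force (tr_env \<theta>) (tr_store \<Sigma>) (tr_heap \<mu>) pc (TWken (tr e)) (tr_store \<Sigma>') (tr_heap \<mu>') pc (tr_val v)"
    using SE_Inl.IH by (intro F_wk) simp
  have a2: "force ((tr_env \<theta>)(Aux LV \<mapsto> tr_val v)) (tr_store \<Sigma>') (tr_heap \<mu>') pc (TThunk (Return (TInl (TVar (Aux LV))))) (tr_store \<Sigma>') (tr_heap \<mu>') pc (VInl (tr_val v))"
    by (intro F_ret peval.intros) simp
  show ?case using F_tolab[OF F_bind[OF a1 a2]] by simp
next
  case (SE_Inr \<theta> pc \<Sigma> \<mu> e \<Sigma>' \<mu>' v)
  have a1: "force (tr_env \<theta>) (tr_store \<Sigma>) (tr_heap \<mu>) pc (TWken (tr e)) (tr_store \<Sigma>') (tr_heap \<mu>') pc (tr_val v)"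
    using SE_Inr.IH by (intro F_wk) simp
  have a2: "force ((tr_env \<theta>)(Aux LV \<mapsto> tr_val v)) (tr_store \<Sigma>') (tr_heap \<mu>') pc (TThunk (Return (TInr (TVar (Aux LV))))) (tr_store \<Sigma>') (tr_heap \<mu>') pc (VInr (tr_val v))"
    by (intro F_ret peval.intros) simp
  show ?case using F_tolab[OF F_bind[OF a1 a2]] by simp
next
  case (SE_CaseL \<theta> pc \<Sigma> \<mu> e \<Sigma>1 \<mu>1 v1 l x1 e1 \<Sigma>2 \<mu>2 v x2 e2)
  obtain r l' where v: "v = SV r l'" by (cases v)
  have le: "sup pc l \<le> l'" using seval_pc[OF SE_CaseL.hyps(2)] v by simp
  let ?T = "tr_env \<theta>"
  let ?T1 = "?T(Aux LV \<mapsto> VLabeled l (VInl (tr_val v1)))"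
  let ?T2 = "?T1(Aux VV \<mapsto> VInl (tr_val v1))"
  let ?T3 = "?T2(Aux LV' \<mapsto> VLabeled l' (tr_rval r))"
  have a1: "force ?T (tr_store \<Sigma>) (tr_heap \<mu>) pc (TWken (tr e)) (tr_store \<Sigma>1) (tr_heap \<mu>1) pc (VLabeled l (VInl (tr_val v1)))"
    using SE_CaseL.IH(1) by (intro F_wk) simp
  have a2: "force ?T1 (tr_store \<Sigma>1) (tr_heap \<mu>1) pc (TThunk (Unlabel (TVar (Aux LV)))) (tr_store \<Sigma>1) (tr_heap \<mu>1) (sup pc l) (VInl (tr_val v1))"
    by (rule F_unl) simp
  have ih: "force ((tr_env \<theta>)(Src x1 \<mapsto> tr_val v1)) (tr_store \<Sigma>1) (tr_heap \<mu>1) (sup pc l) (tr e1) (tr_store \<Sigma>2) (tr_heap \<mu>2) (sup pc l) (VLabeled l' (tr_rval r))"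
    using SE_CaseL.IH(2) v by (simp add: fun_upd_def)
  have a3: "force ?T2 (tr_store \<Sigma>1) (tr_heap \<mu>1) (sup pc l) (TCase (TVar (Aux VV)) (Src x1) (TWken (tr e1)) (Src x2) (TWken (tr e2))) (tr_store \<Sigma>2) (tr_heap \<mu>2) (sup pc l) (VLabeled l' (tr_rval r))"
    apply (rule F_caseL[OF pv])
     apply simp
    apply (rule F_wk)
    using ih by simp
  have a4: "force ?T3 (tr_store \<Sigma>2) (tr_heap \<mu>2) (sup pc l) (TThunk (Unlabel (TVar (Aux LV')))) (tr_store \<Sigma>2) (tr_heap \<mu>2) l' (tr_rval r)"
    by (rule F_pc[OF F_unl]) (simp, simp_all add: sup.absorb2[OF le])
  show ?case using F_tolab[OF F_bind[OF a1 F_bind[OF a2 F_bind[OF a3 a4]]]] v by simp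
next
  case (SE_CaseR \<theta> pc \<Sigma> \<mu> e \<Sigma>1 \<mu>1 v2 l x2 e2 \<Sigma>2 \<mu>2 v x1 e1)
  obtain r l' where v: "v = SV r l'" by (cases v)
  have le: "sup pc l \<le> l'" using seval_pc[OF SE_CaseR.hyps(2)] v by simp
  let ?T = "tr_env \<theta>"
  let ?T1 = "?T(Aux LV \<mapsto> VLabeled l (VInr (tr_val v2)))"
  let ?T2 = "?T1(Aux VV \<mapsto> VInr (tr_val v2))"
  let ?T3 = "?T2(Aux LV' \<mapsto> VLabeled l' (tr_rval r))"
  have a1: "force ?T (tr_store \<Sigma>) (tr_heap \<mu>) pc (TWken (tr e)) (tr_store \<Sigma>1) (tr_heap \<mu>1) pc (VLabeled l (VInr (tr_val v2)))"
    using SE_CaseR.IH(1) by (intro F_wk) simp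
  have a2: "force ?T1 (tr_store \<Sigma>1) (tr_heap \<mu>1) pc (TThunk (Unlabel (TVar (Aux LV)))) (tr_store \<Sigma>1) (tr_heap \<mu>1) (sup pc l) (VInr (tr_val v2))"
    by (rule F_unl) simp
  have ih: "force ((tr_env \<theta>)(Src x2 \<mapsto> tr_val v2)) (tr_store \<Sigma>1) (tr_heap \<mu>1) (sup pc l) (tr e2) (tr_store \<Sigma>2) (tr_heap \<mu>2) (sup pc l) (VLabeled l' (tr_rval r))"
    using SE_CaseR.IH(2) v by (simp add: fun_upd_def)
  have a3: "force ?T2 (tr_store \<Sigma>1) (tr_heap \<mu>1) (sup pc l) (TCase (TVar (Aux VV)) (Src x1) (TWken (tr e1)) (Src x2) (TWken (tr e2))) (tr_store \<Sigma>2) (tr_heap \<mu>2) (sup pc l) (VLabeled l' (tr_rval r))"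
    apply (rule F_caseR[OF pv])
     apply simp
    apply (rule F_wk)
    using ih by simp
  have a4: "force ?T3 (tr_store \<Sigma>2) (tr_heap \<mu>2) (sup pc l) (TThunk (Unlabel (TVar (Aux LV')))) (tr_store \<Sigma>2) (tr_heap \<mu>2) l' (tr_rval r)"
    by (rule F_pc[OF F_unl]) (simp, simp_all add: sup.absorb2[OF le])
  show ?case using F_tolab[OF F_bind[OF a1 F_bind[OF a2 F_bind[OF a3 a4]]]] v by simp
next
  case (SE_Pair \<theta> pc \<Sigma> \<mu> e1 \<Sigma>1 \<mu>1 v1 e2 \<Sigma>2 \<mu>2 v2)
  have a1: "force (tr_env \<theta>) (tr_store \<Sigma>) (tr_heap \<mu>) pc (TWken (tr e1)) (tr_store \<Sigma>1) (tr_heap \<mu>1) pc (tr_val v1)"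
    using SE_Pair.IH(1) by (intro F_wk) simp
  have a2: "force ((tr_env \<theta>)(Aux LV1 \<mapsto> tr_val v1)) (tr_store \<Sigma>1) (tr_heap \<mu>1) pc (TWken (tr e2)) (tr_store \<Sigma>2) (tr_heap \<mu>2) pc (tr_val v2)"
    using SE_Pair.IH(2) by (intro F_wk) simp
  have a3: "force ((tr_env \<theta>)(Aux LV1 \<mapsto> tr_val v1, Aux LV2 \<mapsto> tr_val v2)) (tr_store \<Sigma>2) (tr_heap \<mu>2) pc (TThunk (Return (TPair (TVar (Aux LV1)) (TVar (Aux LV2))))) (tr_store \<Sigma>2) (tr_heap \<mu>2) pc (VPair (tr_val v1) (tr_val v2))"
    by (intro F_ret peval.intros) simp_all
  show ?case using F_tolab[OF F_bind[OF a1 F_bind[OF a2 a3]]] by simp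
next
  case (SE_Fst \<theta> pc \<Sigma> \<mu> e \<Sigma>' \<mu>' v1 v2 l)
  obtain r1 l1 where v: "v1 = SV r1 l1" by (cases v1)
  have le: "pc \<le> l" using seval_pc[OF SE_Fst.hyps] by simp
  let ?P = "VPair (VLabeled l1 (tr_rval r1)) (tr_val v2)"
  let ?T1 = "(tr_env \<theta>)(Aux LV \<mapsto> VLabeled l ?P)"
  have a1: "force (tr_env \<theta>) (tr_store \<Sigma>) (tr_heap \<mu>) pc (TWken (tr e)) (tr_store \<Sigma>') (tr_heap \<mu>') pc (VLabeled l ?P)"
    using SE_Fst.IH v by (intro F_wk) simp
  have a2: "force ?T1 (tr_store \<Sigma>') (tr_heap \<mu>') pc (TThunk (Unlabel (TVar (Aux LV)))) (tr_store \<Sigma>') (tr_heap \<mu>') (sup pc l) ?P"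
    by (rule F_unl) simp
  have a3: "force (?T1(Aux VV \<mapsto> ?P)) (tr_store \<Sigma>') (tr_heap \<mu>') (sup pc l) (TThunk (Unlabel (TFst (TVar (Aux VV))))) (tr_store \<Sigma>') (tr_heap \<mu>') (sup l1 l) (tr_rval r1)"
    by (rule F_pc, rule F_th, rule TE_Unlabel, rule pv_fst[where a="VLabeled l1 (tr_rval r1)" and b="tr_val v2"]) (simp, simp_all add: sup_abs[OF le])
  show ?case using F_tolab[OF F_bind[OF a1 F_bind[OF a2 a3]]] v by simp
next
  case (SE_Snd \<theta> pc \<Sigma> \<mu> e \<Sigma>' \<mu>' v1 v2 l)
  obtain r2 l2 where v: "v2 = SV r2 l2" by (cases v2)
  have le: "pc \<le> l" using seval_pc[OF SE_Snd.hyps] by simp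
  let ?P = "VPair (tr_val v1) (VLabeled l2 (tr_rval r2))"
  let ?T1 = "(tr_env \<theta>)(Aux LV \<mapsto> VLabeled l ?P)"
  have a1: "force (tr_env \<theta>) (tr_store \<Sigma>) (tr_heap \<mu>) pc (TWken (tr e)) (tr_store \<Sigma>') (tr_heap \<mu>') pc (VLabeled l ?P)"
    using SE_Snd.IH v by (intro F_wk) simp
  have a2: "force ?T1 (tr_store \<Sigma>') (tr_heap \<mu>') pc (TThunk (Unlabel (TVar (Aux LV)))) (tr_store \<Sigma>') (tr_heap \<mu>') (sup pc l) ?P"
    by (rule F_unl) simp
  have a3: "force (?T1(Aux VV \<mapsto> ?P)) (tr_store \<Sigma>') (tr_heap \<mu>') (sup pc l) (TThunk (Unlabel (TSnd (TVar (Aux VV))))) (tr_store \<Sigma>') (tr_heap \<mu>') (sup l2 l) (tr_rval r2)"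
    by (rule F_pc, rule F_th, rule TE_Unlabel, rule pv_snd[where a="tr_val v1" and b="VLabeled l2 (tr_rval r2)"]) (simp, simp_all add: sup_abs[OF le])
  show ?case using F_tolab[OF F_bind[OF a1 F_bind[OF a2 a3]]] v by simp
next
  case (SE_LabelOf \<theta> pc \<Sigma> \<mu> e \<Sigma>' \<mu>' r l)
  have le: "pc \<le> l" using seval_pc[OF SE_LabelOf.hyps] by simp
  have a1: "force (tr_env \<theta>) (tr_store \<Sigma>) (tr_heap \<mu>) pc (TWken (tr e)) (tr_store \<Sigma>') (tr_heap \<mu>') pc (VLabeled l (tr_rval r))"
    using SE_LabelOf.IH by (intro F_wk) simp
  have a2: "force ((tr_env \<theta>)(Aux LV \<mapsto> VLabeled l (tr_rval r))) (tr_store \<Sigma>') (tr_heap \<mu>') pc (TThunk (TLabelOf (TVar (Aux LV)))) (tr_store \<Sigma>') (tr_heap \<mu>') l (VLbl l)"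
    by (rule F_pc, rule F_th, rule TE_LabelOf, rule pv[where v="VLabeled l (tr_rval r)"]) (simp, simp_all add: sup.absorb2[OF le])
  show ?case using F_tolab[OF F_bind[OF a1 a2]] by simp
next
  case (SE_Leq \<theta> pc \<Sigma> \<mu> e1 \<Sigma>1 \<mu>1 l1 l1' e2 \<Sigma>2 \<mu>2 l2 l2')
  have le: "pc \<le> l1'" using seval_pc[OF SE_Leq.hyps(1)] by simp
  let ?T = "tr_env \<theta>"
  let ?T1 = "?T(Aux LV1 \<mapsto> VLabeled l1' (VLbl l1))"
  let ?T2 = "?T1(Aux LV2 \<mapsto> VLabeled l2' (VLbl l2))"
  let ?T3 = "?T2(Aux LU \<mapsto> VLabeled pc VUnit)"
  let ?T4 = "?T3(Aux V1 \<mapsto> VLbl l1)"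
  let ?T5 = "?T4(Aux V2 \<mapsto> VLbl l2)"
  let ?res = "tr_rval (if l1 \<le> l2 then RInl (SV RUnit pc) else RInr (SV RUnit pc))"
  have a1: "force ?T (tr_store \<Sigma>) (tr_heap \<mu>) pc (TWken (tr e1)) (tr_store \<Sigma>1) (tr_heap \<mu>1) pc (VLabeled l1' (VLbl l1))"
    using SE_Leq.IH(1) by (intro F_wk) simp
  have a2: "force ?T1 (tr_store \<Sigma>1) (tr_heap \<mu>1) pc (TWken (tr e2)) (tr_store \<Sigma>2) (tr_heap \<mu>2) pc (VLabeled l2' (VLbl l2))"
    using SE_Leq.IH(2) by (intro F_wk) simp
  have a3: "force ?T2 (tr_store \<Sigma>2) (tr_heap \<mu>2) pc (TWken (TThunk (ToLabeled (TThunk (Return TUnit))))) (tr_store \<Sigma>2) (tr_heap \<mu>2) pc (VLabeled pc VUnit)"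
    by (intro F_wk F_tolab F_ret peval.intros)
  have a4: "force ?T3 (tr_store \<Sigma>2) (tr_heap \<mu>2) pc (TThunk (Unlabel (TVar (Aux LV1)))) (tr_store \<Sigma>2) (tr_heap \<mu>2) (sup pc l1') (VLbl l1)"
    by (rule F_unl) simp
  have a5: "force ?T4 (tr_store \<Sigma>2) (tr_heap \<mu>2) (sup pc l1') (TThunk (Unlabel (TVar (Aux LV2)))) (tr_store \<Sigma>2) (tr_heap \<mu>2) (sup l1' l2') (VLbl l2)"
    by (rule F_pc[OF F_unl]) (simp, simp add: sup.absorb2[OF le])
  have lq: "peval ?T5 (TLeq (TVar (Aux V1)) (TVar (Aux V2))) (if l1 \<le> l2 then VInl VUnit else VInr VUnit)"
    by (rule peval.intros; rule pv; simp)
  have pr: "peval ?T5 (TCase (TLeq (TVar (Aux V1)) (TVar (Aux V2))) (Aux Y) (TInl (TVar (Aux LU))) (Aux Y) (TInr (TVar (Aux LU)))) ?res"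
  proof (cases "l1 \<le> l2")
    case True
    have l: "peval ?T5 (TLeq (TVar (Aux V1)) (TVar (Aux V2))) (VInl VUnit)" using lq True by simp
    show ?thesis using True by simp (rule peval.intros(11)[OF l], intro peval.intros, simp)
  next
    case False
    have l: "peval ?T5 (TLeq (TVar (Aux V1)) (TVar (Aux V2))) (VInr VUnit)" using lq False by simp
    show ?thesis using False by simp (rule peval.intros(12)[OF l], intro peval.intros, simp)
  qed
  have a6: "force ?T5 (tr_store \<Sigma>2) (tr_heap \<mu>2) (sup l1' l2') (TThunk (Return (TCase (TLeq (TVar (Aux V1)) (TVar (Aux V2))) (Aux Y) (TInl (TVar (Aux LU))) (Aux Y) (TInr (TVar (Aux LU)))))) (tr_store \<Sigma>2) (tr_heap \<mu>2) (sup l1' l2') ?res"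
    by (rule F_ret[OF pr])
  show ?case using F_tolab[OF F_bind[OF a1 F_bind[OF a2 F_bind[OF a3 F_bind[OF a4 F_bind[OF a5 a6]]]]]] by simp
next
  case (SE_Taint \<theta> pc \<Sigma> \<mu> e1 \<Sigma>1 \<mu>1 l l' e2 \<Sigma>2 \<mu>2 v)
  obtain r lv where v: "v = SV r lv" by (cases v)
  have le1: "pc \<le> l'" using seval_pc[OF SE_Taint.hyps(1)] by simp
  have le2: "l \<le> lv" using seval_pc[OF SE_Taint.hyps(3)] v by simp
  have eq1: "sup (sup pc l') l = l" using le1 SE_Taint.hyps(2)
    by (metis sup.absorb2 sup.orderE)
  let ?T = "tr_env \<theta>"
  let ?T1 = "?T(Aux LV1 \<mapsto> VLabeled l' (VLbl l))"
  let ?T2 = "?T1(Aux V1 \<mapsto> VLbl l)"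
  let ?T3 = "?T2(Aux Y \<mapsto> VUnit)"
  let ?T4 = "?T3(Aux LV2 \<mapsto> VLabeled lv (tr_rval r))"
  have a1: "force ?T (tr_store \<Sigma>) (tr_heap \<mu>) pc (TWken (tr e1)) (tr_store \<Sigma>1) (tr_heap \<mu>1) pc (VLabeled l' (VLbl l))"
    using SE_Taint.IH(1) by (intro F_wk) simp
  have a2: "force ?T1 (tr_store \<Sigma>1) (tr_heap \<mu>1) pc (TThunk (Unlabel (TVar (Aux LV1)))) (tr_store \<Sigma>1) (tr_heap \<mu>1) (sup pc l') (VLbl l)"
    by (rule F_unl) simp
  have a3: "force ?T2 (tr_store \<Sigma>1) (tr_heap \<mu>1) (sup pc l') (TThunk (TTaint (TVar (Aux V1)))) (tr_store \<Sigma>1) (tr_heap \<mu>1) l VUnit"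
    by (rule F_pc[OF F_th[OF TE_Taint[OF pv[where v="VLbl l"]]]]) (simp, simp add: eq1)
  have a4: "force ?T3 (tr_store \<Sigma>1) (tr_heap \<mu>1) l (TWken (tr e2)) (tr_store \<Sigma>2) (tr_heap \<mu>2) l (VLabeled lv (tr_rval r))"
    using SE_Taint.IH(2) v by (intro F_wk) simp
  have a5: "force ?T4 (tr_store \<Sigma>2) (tr_heap \<mu>2) l (TThunk (Unlabel (TVar (Aux LV2)))) (tr_store \<Sigma>2) (tr_heap \<mu>2) lv (tr_rval r)"
    by (rule F_pc[OF F_unl]) (simp, simp add: sup.absorb2[OF le2])
  show ?case using F_tolab[OF F_bind[OF a1 F_bind[OF a2 F_bind[OF a3 F_bind[OF a4 a5]]]]] v by simp
next
  case (SE_NewI \<theta> pc \<Sigma> \<mu> e \<Sigma>' \<mu>' r l n)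
  have le: "pc \<le> l" using seval_pc[OF SE_NewI.hyps(1)] by simp
  have a1: "force (tr_env \<theta>) (tr_store \<Sigma>) (tr_heap \<mu>) pc (TWken (tr e)) (tr_store \<Sigma>') (tr_heap \<mu>') pc (VLabeled l (tr_rval r))"
    using SE_NewI.IH by (intro F_wk) simp
  have a2: "force ((tr_env \<theta>)(Aux LV \<mapsto> VLabeled l (tr_rval r))) (tr_store \<Sigma>') (tr_heap \<mu>') pc (TThunk (TNew RI (TVar (Aux LV)))) ((tr_store \<Sigma>')(l := lupd (tr_store \<Sigma>' l) n (tr_rval r))) (tr_heap \<mu>') pc (VRefI n l)"
    by (intro F_th TE_NewI pv) (simp_all add: le SE_NewI.hyps(2) tr_store_def)
  show ?case using F_tolab[OF F_bind[OF a1 a2]] by (simp add: tr_store_upd tr_store_upd2 fun_upd_def map_lupd tr_store_app[of \<Sigma>' l])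
next
  case (SE_DerefI \<theta> pc \<Sigma> \<mu> e \<Sigma>' \<mu>' n l l' r)
  have le: "pc \<le> l'" using seval_pc[OF SE_DerefI.hyps(1)] by simp
  let ?T1 = "(tr_env \<theta>)(Aux LR \<mapsto> VLabeled l' (VRefI n l))"
  have a1: "force (tr_env \<theta>) (tr_store \<Sigma>) (tr_heap \<mu>) pc (TWken (tr e)) (tr_store \<Sigma>') (tr_heap \<mu>') pc (VLabeled l' (VRefI n l))"
    using SE_DerefI.IH by (intro F_wk) simp
  have a2: "force ?T1 (tr_store \<Sigma>') (tr_heap \<mu>') pc (TThunk (Unlabel (TVar (Aux LR)))) (tr_store \<Sigma>') (tr_heap \<mu>') (sup pc l') (VRefI n l)"
    by (rule F_unl) simp
  have a3: "force (?T1(Aux R \<mapsto> VRefI n l)) (tr_store \<Sigma>') (tr_heap \<mu>') (sup pc l') (TThunk (TDeref RI (TVar (Aux R)))) (tr_store \<Sigma>') (tr_heap \<mu>') (sup l l') (tr_rval r)"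
    by (rule F_eq[OF F_th[OF TE_DerefI[OF pv[where v="VRefI n l"]]]]) (simp_all add: SE_DerefI.hyps tr_store_def sup_abs[OF le])
  show ?case using F_tolab[OF F_bind[OF a1 F_bind[OF a2 a3]]] by simp
next
  case (SE_AssignI \<theta> pc \<Sigma> \<mu> e1 \<Sigma>' \<mu>' n l l1 e2 \<Sigma>'' \<mu>'' r l2)
  have le: "pc \<le> l1" using seval_pc[OF SE_AssignI.hyps(1)] by simp
  let ?T = "tr_env \<theta>"
  let ?T1 = "?T(Aux LR \<mapsto> VLabeled l1 (VRefI n l))"
  let ?T2 = "?T1(Aux LV \<mapsto> VLabeled l2 (tr_rval r))"
  let ?St = "(tr_store \<Sigma>'')(l := lupd (tr_store \<Sigma>'' l) n (tr_rval r))"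
  have a1: "force ?T (tr_store \<Sigma>) (tr_heap \<mu>) pc (TWken (tr e1)) (tr_store \<Sigma>') (tr_heap \<mu>') pc (VLabeled l1 (VRefI n l))"
    using SE_AssignI.IH(1) by (intro F_wk) simp
  have a2: "force ?T1 (tr_store \<Sigma>') (tr_heap \<mu>') pc (TWken (tr e2)) (tr_store \<Sigma>'') (tr_heap \<mu>'') pc (VLabeled l2 (tr_rval r))"
    using SE_AssignI.IH(2) by (intro F_wk) simp
  have a3: "force ?T2 (tr_store \<Sigma>'') (tr_heap \<mu>'') pc (TThunk (Unlabel (TVar (Aux LR)))) (tr_store \<Sigma>'') (tr_heap \<mu>'') (sup pc l1) (VRefI n l)"
    by (rule F_unl) simp
  have a4: "force (?T2(Aux R \<mapsto> VRefI n l)) (tr_store \<Sigma>'') (tr_heap \<mu>'') (sup pc l1) (TThunk (TAssign RI (TVar (Aux R)) (TVar (Aux LV)))) ?St (tr_heap \<mu>'') (sup pc l1) VUnit"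
    apply (rule F_th[OF TE_AssignI[OF pv[where v="VRefI n l"] pv[where v="VLabeled l2 (tr_rval r)"]]])
    using SE_AssignI.hyps le by (auto simp: tr_store_def intro: order_trans)
  have b: "force ?T (tr_store \<Sigma>) (tr_heap \<mu>) pc (TThunk (ToLabeled (TThunk (Bind (TWken (tr e1)) (Aux LR) (TThunk (Bind (TWken (tr e2)) (Aux LV) (TThunk (Bind (TThunk (Unlabel (TVar (Aux LR)))) (Aux R) (TThunk (TAssign RI (TVar (Aux R)) (TVar (Aux LV)))))))))))) ?St (tr_heap \<mu>'') pc (VLabeled (sup pc l1) VUnit)"
    by (rule F_tolab[OF F_bind[OF a1 F_bind[OF a2 F_bind[OF a3 a4]]]])
  have c: "force (?T(Aux Y \<mapsto> VLabeled (sup pc l1) VUnit)) ?St (tr_heap \<mu>'') pc (TWken (TThunk (ToLabeled (TThunk (Return TUnit))))) ?St (tr_heap \<mu>'') pc (VLabeled pc VUnit)"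
    by (intro F_wk F_tolab F_ret peval.intros)
  show ?case using F_bind[OF b c] by (simp add: tr_store_upd tr_store_upd2 fun_upd_def map_lupd tr_store_app[of \<Sigma>'' l])
next
  case (SE_LabelOfRefI \<theta> pc \<Sigma> \<mu> e \<Sigma>' \<mu>' n l l')
  have le: "pc \<le> l'" using seval_pc[OF SE_LabelOfRefI.hyps(1)] by simp
  let ?T1 = "(tr_env \<theta>)(Aux LR \<mapsto> VLabeled l' (VRefI n l))"
  have a1: "force (tr_env \<theta>) (tr_store \<Sigma>) (tr_heap \<mu>) pc (TWken (tr e)) (tr_store \<Sigma>') (tr_heap \<mu>') pc (VLabeled l' (VRefI n l))"
    using SE_LabelOfRefI.IH by (intro F_wk) simp
  have a2: "force ?T1 (tr_store \<Sigma>') (tr_heap \<mu>') pc (TThunk (Unlabel (TVar (Aux LR)))) (tr_store \<Sigma>') (tr_heap \<mu>') (sup pc l') (VRefI n l)"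
    by (rule F_unl) simp
  have a3: "force (?T1(Aux R \<mapsto> VRefI n l)) (tr_store \<Sigma>') (tr_heap \<mu>') (sup pc l') (TThunk (TLabelOfRef RI (TVar (Aux R)))) (tr_store \<Sigma>') (tr_heap \<mu>') (sup l l') (VLbl l)"
    by (rule F_pc[OF F_th[OF TE_LabelOfRefI[OF pv[where v="VRefI n l"]]]]) (simp, simp add: sup_abs[OF le])
  show ?case using F_tolab[OF F_bind[OF a1 F_bind[OF a2 a3]]] by simp
next
  case (SE_NewS \<theta> pc \<Sigma> \<mu> e \<Sigma>' \<mu>' v n)
  obtain r l where v: "v = SV r l" by (cases v)
  have le: "pc \<le> l" using seval_pc[OF SE_NewS.hyps(1)] v by simp
  have a1: "force (tr_env \<theta>) (tr_store \<Sigma>) (tr_heap \<mu>) pc (TWken (tr e)) (tr_store \<Sigma>') (tr_heap \<mu>') pc (VLabeled l (tr_rval r))"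
    using SE_NewS.IH v by (intro F_wk) simp
  have a2: "force ((tr_env \<theta>)(Aux LV \<mapsto> VLabeled l (tr_rval r))) (tr_store \<Sigma>') (tr_heap \<mu>') pc (TThunk (TNew RS (TVar (Aux LV)))) (tr_store \<Sigma>') (lupd (tr_heap \<mu>') n (l, tr_rval r)) pc (VRefS n)"
    by (intro F_th TE_NewS pv) (simp_all add: le SE_NewS.hyps(2) tr_heap_def)
  show ?case using F_tolab[OF F_bind[OF a1 a2]] v by (simp add: map_lupd tr_heap_def)
next
  case (SE_DerefS \<theta> pc \<Sigma> \<mu> e \<Sigma>' \<mu>' n l r l')
  have le: "pc \<le> l" using seval_pc[OF SE_DerefS.hyps(1)] by simp
  let ?T1 = "(tr_env \<theta>)(Aux LR \<mapsto> VLabeled l (VRefS n))"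
  have a1: "force (tr_env \<theta>) (tr_store \<Sigma>) (tr_heap \<mu>) pc (TWken (tr e)) (tr_store \<Sigma>') (tr_heap \<mu>') pc (VLabeled l (VRefS n))"
    using SE_DerefS.IH by (intro F_wk) simp
  have a2: "force ?T1 (tr_store \<Sigma>') (tr_heap \<mu>') pc (TThunk (Unlabel (TVar (Aux LR)))) (tr_store \<Sigma>') (tr_heap \<mu>') (sup pc l) (VRefS n)"
    by (rule F_unl) simp
  have a3: "force (?T1(Aux R \<mapsto> VRefS n)) (tr_store \<Sigma>') (tr_heap \<mu>') (sup pc l) (TThunk (TDeref RS (TVar (Aux R)))) (tr_store \<Sigma>') (tr_heap \<mu>') (sup l l') (tr_rval r)"
    by (rule F_pc[OF F_th[OF TE_DerefS[OF pv[where v="VRefS n"], where l=l' and v="tr_rval r"]]]) (simp_all add: SE_DerefS.hyps tr_heap_def sup_abs'[OF le])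
  show ?case using F_tolab[OF F_bind[OF a1 F_bind[OF a2 a3]]] by simp
next
  case (SE_LabelOfRefS \<theta> pc \<Sigma> \<mu> e \<Sigma>' \<mu>' n l1 r l2)
  have le: "pc \<le> l1" using seval_pc[OF SE_LabelOfRefS.hyps(1)] by simp
  let ?T1 = "(tr_env \<theta>)(Aux LR \<mapsto> VLabeled l1 (VRefS n))"
  have a1: "force (tr_env \<theta>) (tr_store \<Sigma>) (tr_heap \<mu>) pc (TWken (tr e)) (tr_store \<Sigma>') (tr_heap \<mu>') pc (VLabeled l1 (VRefS n))"
    using SE_LabelOfRefS.IH by (intro F_wk) simp
  have a2: "force ?T1 (tr_store \<Sigma>') (tr_heap \<mu>') pc (TThunk (Unlabel (TVar (Aux LR)))) (tr_store \<Sigma>') (tr_heap \<mu>') (sup pc l1) (VRefS n)"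
    by (rule F_unl) simp
  have a3: "force (?T1(Aux R \<mapsto> VRefS n)) (tr_store \<Sigma>') (tr_heap \<mu>') (sup pc l1) (TThunk (TLabelOfRef RS (TVar (Aux R)))) (tr_store \<Sigma>') (tr_heap \<mu>') (sup l1 l2) (VLbl l2)"
    by (rule F_pc[OF F_th[OF TE_LabelOfRefS[OF pv[where v="VRefS n"], where l=l2 and v="tr_rval r"]]]) (simp_all add: SE_LabelOfRefS.hyps tr_heap_def sup.absorb2[OF le] sup.assoc)
  show ?case using F_tolab[OF F_bind[OF a1 F_bind[OF a2 a3]]] by simp
next
  case (SE_AssignS \<theta> pc \<Sigma> \<mu> e1 \<Sigma>' \<mu>' n l e2 \<Sigma>'' \<mu>'' r2 l2 r1 l1)
  have le: "pc \<le> l" using seval_pc[OF SE_AssignS.hyps(1)] by simp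
  let ?T = "tr_env \<theta>"
  let ?T1 = "?T(Aux LR \<mapsto> VLabeled l (VRefS n))"
  let ?T2 = "?T1(Aux LV \<mapsto> VLabeled l2 (tr_rval r2))"
  let ?H = "(tr_heap \<mu>'')[n := (sup (sup pc l) l2, tr_rval r2)]"
  have a1: "force ?T (tr_store \<Sigma>) (tr_heap \<mu>) pc (TWken (tr e1)) (tr_store \<Sigma>') (tr_heap \<mu>') pc (VLabeled l (VRefS n))"
    using SE_AssignS.IH(1) by (intro F_wk) simp
  have a2: "force ?T1 (tr_store \<Sigma>') (tr_heap \<mu>') pc (TWken (tr e2)) (tr_store \<Sigma>'') (tr_heap \<mu>'') pc (VLabeled l2 (tr_rval r2))"
    using SE_AssignS.IH(2) by (intro F_wk) simp
  have a3: "force ?T2 (tr_store \<Sigma>'') (tr_heap \<mu>'') pc (TThunk (Unlabel (TVar (Aux LR)))) (tr_store \<Sigma>'') (tr_heap \<mu>'') (sup pc l) (VRefS n)"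
    by (rule F_unl) simp
  have a4: "force (?T2(Aux R \<mapsto> VRefS n)) (tr_store \<Sigma>'') (tr_heap \<mu>'') (sup pc l) (TThunk (TAssign RS (TVar (Aux R)) (TVar (Aux LV)))) (tr_store \<Sigma>'') ?H (sup pc l) VUnit"
    apply (rule F_th)
    apply (rule TE_AssignS)
        apply (rule pv, simp)
       apply (rule pv, simp)
    using SE_AssignS.hyps le by (auto simp: tr_heap_def intro: order_trans)
  have b: "force ?T (tr_store \<Sigma>) (tr_heap \<mu>) pc (TThunk (ToLabeled (TThunk (Bind (TWken (tr e1)) (Aux LR) (TThunk (Bind (TWken (tr e2)) (Aux LV) (TThunk (Bind (TThunk (Unlabel (TVar (Aux LR)))) (Aux R) (TThunk (TAssign RS (TVar (Aux R)) (TVar (Aux LV)))))))))))) (tr_store \<Sigma>'') ?H pc (VLabeled (sup pc l) VUnit)"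
    by (rule F_tolab[OF F_bind[OF a1 F_bind[OF a2 F_bind[OF a3 a4]]]])
  have c: "force (?T(Aux Y \<mapsto> VLabeled (sup pc l) VUnit)) (tr_store \<Sigma>'') ?H pc (TWken (TThunk (ToLabeled (TThunk (Return TUnit))))) (tr_store \<Sigma>'') ?H pc (VLabeled pc VUnit)"
    by (intro F_wk F_tolab F_ret peval.intros)
  have eq: "sup (sup pc l) l2 = sup l2 l" by (rule sup_abs[OF le])
  show ?case using F_bind[OF b c] by (simp add: tr_heap_def map_update eq)
qed


theorem mainTheorem5:
  fixes e :: "('v, 'l::lattice) sexp"
    and \<Gamma> :: "'v \<Rightarrow> sty option"
  assumes "styping \<Gamma> e \<tau>"
    and "seval \<theta> pc \<Sigma> \<mu> e \<Sigma>' \<mu>' v"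
  shows "force (tr_env \<theta>) (tr_store \<Sigma>) (tr_heap \<mu>) pc (tr e)
           (tr_store \<Sigma>') (tr_heap \<mu>') pc (tr_val v)"
  using assms(2) by (rule tr_main)

end
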